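(* For every prime power $q$, all integers $n$, $r\le\lfloor n/2\rfloor$ and $0<\rho<r$, $$K_{\mathrm{C}}(q,n,r,\rho)\le \left\{1 - \log_{{n\brack r}}\left({n\brack r} - V_{\mathrm{C}}(\rho)\right)\right\}^{-1} + 1.$$
   Context: ${m\brack k}=\prod_{i=0}^{k-1}\frac{q^m-q^i}{q^k-q^i}$ is the Gaussian binomial. $N_{\mathrm{C}}(d) = q^{d^2}{r\brack d}{n-r \brack d}$ and $V_{\mathrm{C}}(t)=\sum_{d=0}^t N_{\mathrm{C}}(d)$. $E_r(q,n)$ is the set of $r$-dimensional subspaces of $\mathrm{GF}(q)^n$ with injection distance $d_{\mathrm{I}}(U,V)=\dim(U+V)-\min\{\dim U,\dim V\}$; the covering radius of a nonempty $\mathcal{C}\subseteq E_r(q,n)$ is $\max_U\min_{C\in\mathcal{C}}d_{\mathrm{I}}(U,C)$, and $K_{\mathrm{C}}(q,n,r,\rho)$ is the minimum cardinality of a subset of $E_r(q,n)$ with covering radius at most $\rho$. *)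

theory Defs
  imports Complex_Main "HOL-Library.Function_Algebras"
begin

text \<open>Vectors of GF(q)^n are modelled as functions nat => 'a that vanish
outside the index set {0..<n}; 'a is a finite field (so q = CARD('a)).\<close>

definition vscale :: "'a::field \<Rightarrow> (nat \<Rightarrow> 'a) \<Rightarrow> (nat \<Rightarrow> 'a)" where
  "vscale c v = (\<lambda>i. c * v i)"

definition ambient :: "nat \<Rightarrow> (nat \<Rightarrow> 'a::field) set" where
  "ambient n = {v. \<forall>i\<ge>n. v i = 0}"

definition sdim :: "(nat \<Rightarrow> 'a::field) set \<Rightarrow> nat" where
  "sdim U = vector_space.dim vscale U"

definition Er :: "'a::{finite,field} itself \<Rightarrow> nat \<Rightarrow> nat \<Rightarrow> (nat \<Rightarrow> 'a) set set" where
  "Er _ n r = {U. module.subspace vscale U \<and> U \<subseteq> ambient n \<and> sdim U = r}"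

definition dI :: "(nat \<Rightarrow> 'a::field) set \<Rightarrow> (nat \<Rightarrow> 'a) set \<Rightarrow> nat" where
  "dI U V = sdim (module.span vscale (U \<union> V)) - min (sdim U) (sdim V)"

definition covering_radius ::
  "'a::{finite,field} itself \<Rightarrow> nat \<Rightarrow> nat \<Rightarrow> (nat \<Rightarrow> 'a) set set \<Rightarrow> nat" where
  "covering_radius T n r C = Max ((\<lambda>U. Min ((\<lambda>D. dI U D) ` C)) ` Er T n r)"

definition KC :: "'a::{finite,field} itself \<Rightarrow> nat \<Rightarrow> nat \<Rightarrow> nat \<Rightarrow> nat" where
  "KC T n r \<rho> = Min {card C | C. C \<subseteq> Er T n r \<and> C \<noteq> {} \<and> covering_radius T n r C \<le> \<rho>}"

definition gauss_binom :: "real \<Rightarrow> nat \<Rightarrow> nat \<Rightarrow> real" where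
  "gauss_binom q m k = (\<Prod>i<k. (q ^ m - q ^ i) / (q ^ k - q ^ i))"

definition NC :: "real \<Rightarrow> nat \<Rightarrow> nat \<Rightarrow> nat \<Rightarrow> real" where
  "NC q n r d = q ^ (d^2) * gauss_binom q r d * gauss_binom q (n - r) d"

definition VC :: "real \<Rightarrow> nat \<Rightarrow> nat \<Rightarrow> nat \<Rightarrow> real" where
  "VC q n r t = (\<Sum>d = 0..t. NC q n r d)"

end

theory Submission
  imports Defs
begin

interpretation V: vector_space "vscale :: 'a::field \<Rightarrow> (nat \<Rightarrow> 'a) \<Rightarrow> _"
  by unfold_locales (simp_all add: vscale_def fun_eq_iff algebra_simps)

lemma sdim_eq: "sdim U = V.dim U" by (simp add: sdim_def)

lemma subspace_ambient: "V.subspace (ambient n :: (nat \<Rightarrow> 'a::field) set)"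
  by (auto simp: V.subspace_def ambient_def vscale_def)

lemma finite_ambient: "finite (ambient n :: (nat \<Rightarrow> 'a::{finite,field}) set)"
proof -
  have "ambient n = (\<lambda>xs i. if i < n then xs ! i else (0::'a)) ` {xs. set xs \<subseteq> UNIV \<and> length xs = n}"
  proof (intro set_eqI iffI)
    fix v :: "nat \<Rightarrow> 'a" assume "v \<in> ambient n"
    then have "v = (\<lambda>i. if i < n then map v [0..<n] ! i else 0)"
      by (auto simp: ambient_def fun_eq_iff)
    then show "v \<in> (\<lambda>xs i. if i < n then xs ! i else (0::'a)) ` {xs. set xs \<subseteq> UNIV \<and> length xs = n}"
      by (intro image_eqI[of _ _ "map v [0..<n]"]) auto
  qed (auto simp: ambient_def)
  then show ?thesis using finite_lists_length_eq[of "UNIV::'a set" n] by simp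
qed

lemma card_ambient: "card (ambient n :: (nat \<Rightarrow> 'a::{finite,field}) set) = card (UNIV :: 'a set) ^ n"
proof -
  let ?f = "\<lambda>xs i. if i < n then xs ! i else (0::'a)"
  have eq: "ambient n = ?f ` {xs. set xs \<subseteq> UNIV \<and> length xs = n}"
  proof (intro set_eqI iffI)
    fix v :: "nat \<Rightarrow> 'a" assume "v \<in> ambient n"
    then have "v = (\<lambda>i. if i < n then map v [0..<n] ! i else 0)"
      by (auto simp: ambient_def fun_eq_iff)
    then show "v \<in> ?f ` {xs. set xs \<subseteq> UNIV \<and> length xs = n}"
      by (intro image_eqI[of _ _ "map v [0..<n]"]) auto
  qed (auto simp: ambient_def)
  have inj: "inj_on ?f {xs. set xs \<subseteq> UNIV \<and> length xs = n}"
  proof (rule inj_onI)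
    fix xs ys assume "xs \<in> {xs. set xs \<subseteq> UNIV \<and> length xs = n}" "ys \<in> {xs. set xs \<subseteq> UNIV \<and> length xs = n}"
      and h: "?f xs = ?f ys"
    then have len: "length xs = n" "length ys = n" by auto
    have "xs ! i = ys ! i" if "i < n" for i
    proof -
      have "?f xs i = ?f ys i" using h by (rule fun_cong)
      then show ?thesis using that by simp
    qed
    then show "xs = ys" using len by (simp add: nth_equalityI)
  qed
  show ?thesis unfolding eq using card_image[OF inj] card_lists_length_eq[of "UNIV::'a set" n] by simp
qed

lemma span_sub_ambient: "A \<subseteq> ambient n \<Longrightarrow> V.span A \<subseteq> ambient n"
  by (rule V.span_minimal[OF _ subspace_ambient])

lemma card_field_ge2: "card (UNIV :: 'a::{finite,field} set) \<ge> 2"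
proof -
  have "card {0::'a, 1} \<le> card (UNIV :: 'a set)" by (rule card_mono) auto
  then show ?thesis by simp
qed

lemma card_span_insert:
  fixes S :: "(nat \<Rightarrow> 'a::{finite,field}) set"
  assumes fin: "finite (V.span S)" and x: "x \<notin> V.span S"
  shows "card (V.span (insert x S)) = card (UNIV :: 'a set) * card (V.span S)"
proof -
  let ?g = "\<lambda>(k::'a, z). vscale k x + z"
  have img: "?g ` (UNIV \<times> V.span S) = V.span (insert x S)"
  proof (intro set_eqI iffI)
    fix y assume "y \<in> ?g ` (UNIV \<times> V.span S)"
    then obtain a b where "y = vscale a x + b" "b \<in> V.span S" by auto
    then show "y \<in> V.span (insert x S)"
      unfolding V.span_insert by (intro CollectI exI[of _ a]) simp
  next
    fix y assume "y \<in> V.span (insert x S)"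
    then obtain k where "y - vscale k x \<in> V.span S" by (auto simp: V.span_insert)
    then show "y \<in> ?g ` (UNIV \<times> V.span S)"
      by (intro image_eqI[of _ _ "(k, y - vscale k x)"]) auto
  qed
  have inj: "inj_on ?g (UNIV \<times> V.span S)"
  proof (rule inj_onI, clarify)
    fix k z k' z' assume z: "z \<in> V.span S" and z': "z' \<in> V.span S"
      and e: "vscale k x + z = vscale k' x + z'"
    show "k = k' \<and> z = z'"
    proof (cases "k = k'")
      case True then show ?thesis using e by simp
    next
      case False
      have e2: "vscale k x - vscale k' x = z' - z" using e
        by (simp add: algebra_simps)
      have "vscale (k - k') x = vscale k x - vscale k' x"
        by (simp add: vscale_def fun_eq_iff algebra_simps)
      then have "vscale (k - k') x = z' - z" using e2 by simp
      then have "vscale (inverse (k - k')) (vscale (k - k') x) \<in> V.span S"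
        using z z' by (simp add: V.span_diff V.span_scale)
      moreover have "vscale (inverse (k - k')) (vscale (k - k') x) = x" using False by (simp add: vscale_def mult.assoc[symmetric])
      ultimately have "x \<in> V.span S" by simp
      then show ?thesis using x by simp
    qed
  qed
  show ?thesis using card_image[OF inj] img by (simp add: card_cartesian_product)
qed


lemma card_span_indep:
  fixes B :: "(nat \<Rightarrow> 'a::{finite,field}) set"
  assumes "V.independent B" "B \<subseteq> ambient n"
  shows "card (V.span B) = card (UNIV::'a set) ^ card B"
proof -
  have "finite B" using assms(2) finite_ambient finite_subset by blast
  then show ?thesis using assms
  proof (induction B rule: finite_induct)
    case empty then show ?case by simp
  next
    case (insert b F)
    have "V.independent F" "b \<notin> V.span F" using insert.prems(1) insert.hyps(2)
      by (simp_all add: V.independent_insert)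
    moreover have "finite (V.span F)"
      using span_sub_ambient[of F n] insert.prems(2) finite_ambient finite_subset by blast
    ultimately show ?case using insert card_span_insert[of F b] by simp
  qed
qed

lemma card_span_dim:
  fixes X :: "(nat \<Rightarrow> 'a::{finite,field}) set"
  assumes "X \<subseteq> ambient n"
  shows "card (V.span X) = card (UNIV::'a set) ^ V.dim X"
proof -
  obtain B where B: "B \<subseteq> X" "V.independent B" "X \<subseteq> V.span B" "card B = V.dim X"
    using V.basis_exists by blast
  have "V.span B = V.span X"
  proof
    show "V.span B \<subseteq> V.span X" using B(1) by (rule V.span_mono)
    show "V.span X \<subseteq> V.span B" using B(3) by (rule V.span_minimal[OF _ V.subspace_span])
  qed
  then show ?thesis using card_span_indep[OF B(2)] B assms by force
qed

lemma card_subspace_dim: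
  fixes X :: "(nat \<Rightarrow> 'a::{finite,field}) set"
  assumes "X \<subseteq> ambient n" "V.subspace X"
  shows "card X = card (UNIV::'a set) ^ V.dim X"
proof -
  have "V.span X = X" using assms(2) by (intro V.span_subspace) (auto intro: V.span_base)
  then show ?thesis using card_span_dim[OF assms(1)] by (metis)
qed

lemma pow_inj_q:
  "card (UNIV::'a::{finite,field} set) ^ a = card (UNIV::'a set) ^ b \<Longrightarrow> a = b"
  using card_field_ge2[where 'a='a] by (simp add: power_inject_exp)

fun indm :: "(nat \<Rightarrow> 'a::field) set \<Rightarrow> (nat \<Rightarrow> 'a) list \<Rightarrow> bool" where
  "indm X [] = True"
| "indm X (v # vs) = (v \<notin> V.span (X \<union> set vs) \<and> indm X vs)"

lemma card_span_indm:
  fixes X :: "(nat \<Rightarrow> 'a::{finite,field}) set"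
  assumes "X \<subseteq> ambient n" "set vs \<subseteq> ambient n" "indm X vs"
  shows "card (V.span (X \<union> set vs)) = card (V.span X) * card (UNIV::'a set) ^ length vs"
  using assms
proof (induction vs)
  case Nil then show ?case by simp
next
  case (Cons v vs)
  have fin: "finite (V.span (X \<union> set vs))"
    by (rule finite_subset[OF span_sub_ambient finite_ambient]) (use Cons.prems in auto)
  have "X \<union> set (v # vs) = insert v (X \<union> set vs)" by auto
  then have "card (V.span (X \<union> set (v # vs))) = card (UNIV::'a set) * card (V.span (X \<union> set vs))"
    using card_span_insert[OF fin, of v] Cons.prems by simp
  then show ?case using Cons by simp
qed

lemma count_indm:
  fixes S X :: "(nat \<Rightarrow> 'a::{finite,field}) set"
  assumes S: "V.subspace S" "S \<subseteq> ambient n" and X: "X \<subseteq> S"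
  shows "card {vs. set vs \<subseteq> S \<and> length vs = k \<and> indm X vs}
       = (\<Prod>i<k. card S - card (V.span X) * card (UNIV::'a set) ^ i)"
proof (induction k)
  case 0
  have "{vs. set vs \<subseteq> S \<and> length vs = 0 \<and> indm X vs} = {[]}" by auto
  then show ?case by simp
next
  case (Suc k)
  let ?L = "{vs. set vs \<subseteq> S \<and> length vs = k \<and> indm X vs}"
  let ?c = "card S - card (V.span X) * card (UNIV::'a set) ^ k"
  have finS: "finite S" using S finite_ambient finite_subset by blast
  have XA: "X \<subseteq> ambient n" using X S by blast
  have finL: "finite ?L"
    by (rule finite_subset[OF _ finite_lists_length_eq[OF finS, of k]]) auto
  have eq: "{vs. set vs \<subseteq> S \<and> length vs = Suc k \<and> indm X vs}
      = (\<lambda>(vs, v). v # vs) ` (SIGMA vs:?L. S - V.span (X \<union> set vs))"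
  proof (intro set_eqI iffI)
    fix ws assume "ws \<in> {vs. set vs \<subseteq> S \<and> length vs = Suc k \<and> indm X vs}"
    then obtain v vs where "ws = v # vs" "set (v#vs) \<subseteq> S" "length vs = k" "indm X (v # vs)"
      by (cases ws) auto
    then show "ws \<in> (\<lambda>(vs, v). v # vs) ` (SIGMA vs:?L. S - V.span (X \<union> set vs))"
      by (intro image_eqI[of _ _ "(vs, v)"]) auto
  next
    fix ws assume "ws \<in> (\<lambda>(vs, v). v # vs) ` (SIGMA vs:?L. S - V.span (X \<union> set vs))"
    then show "ws \<in> {vs. set vs \<subseteq> S \<and> length vs = Suc k \<and> indm X vs}" by auto
  qed
  have inj: "inj_on (\<lambda>(vs, v). v # vs) (SIGMA vs:?L. S - V.span (X \<union> set vs))"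
    by (rule inj_onI) auto
  have each: "card (S - V.span (X \<union> set vs)) = ?c" if "vs \<in> ?L" for vs
  proof -
    have sub: "V.span (X \<union> set vs) \<subseteq> S"
      using that X S(1) by (intro V.span_minimal) auto
    have "card (V.span (X \<union> set vs)) = card (V.span X) * card (UNIV::'a set) ^ k"
      using card_span_indm[OF XA, of vs] that S(2) by auto
    then show ?thesis using card_Diff_subset[OF finite_subset[OF sub finS] sub] by simp
  qed
  have "card {vs. set vs \<subseteq> S \<and> length vs = Suc k \<and> indm X vs}
      = (\<Sum>vs\<in>?L. card (S - V.span (X \<union> set vs)))"
    unfolding eq card_image[OF inj]
    by (rule card_SigmaI[OF finL]) (use finS in auto)
  also have "\<dots> = card ?L * ?c" using each by simp
  finally show ?case using Suc.IH by simp
qed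


declare V.span_eq_iff[simp del]

lemma sp_eq: "V.subspace Y \<Longrightarrow> V.span Y = Y"
  by (intro V.span_subspace) (auto intro: V.span_base)

definition Sub :: "(nat \<Rightarrow> 'a::field) set \<Rightarrow> nat \<Rightarrow> (nat \<Rightarrow> 'a) set set" where
  "Sub S k = {Y. V.subspace Y \<and> Y \<subseteq> S \<and> V.dim Y = k}"

lemma card_fibers:
  assumes "finite A" "f ` A \<subseteq> B" "finite B" "\<And>b. b \<in> B \<Longrightarrow> card {a\<in>A. f a = b} = c"
  shows "card A = card B * c"
proof -
  have eq: "A = (\<Union>b\<in>B. {a\<in>A. f a = b})" using assms(2) by auto
  have "card (\<Union>b\<in>B. {a\<in>A. f a = b}) = (\<Sum>b\<in>B. card {a\<in>A. f a = b})"
    by (rule card_UN_disjoint) (use assms(1,3) in auto)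
  then have "card A = (\<Sum>b\<in>B. card {a\<in>A. f a = b})" using eq by simp
  also have "\<dots> = card B * c" using assms(4) by simp
  finally show ?thesis .
qed

lemma card_span_set:
  fixes vs :: "(nat \<Rightarrow> 'a::{finite,field}) list"
  assumes "set vs \<subseteq> ambient n" "indm {} vs"
  shows "card (V.span (set vs)) = card (UNIV::'a set) ^ length vs"
  using card_span_indm[of "{}" n vs] assms by simp

lemma count_sub:
  fixes S :: "(nat \<Rightarrow> 'a::{finite,field}) set"
  assumes S: "V.subspace S" "S \<subseteq> ambient n"
  shows "card (Sub S k) * (\<Prod>i<k. card (UNIV::'a set) ^ k - card (UNIV::'a set) ^ i)
       = (\<Prod>i<k. card S - card (UNIV::'a set) ^ i)"
proof -
  let ?q = "card (UNIV::'a set)"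
  let ?A = "{vs. set vs \<subseteq> S \<and> length vs = k \<and> indm {} vs}"
  have finS: "finite S" using S finite_ambient finite_subset by blast
  have cA: "card ?A = (\<Prod>i<k. card S - ?q ^ i)"
    using count_indm[OF S, of "{}" k] by simp
  have finA: "finite ?A"
    by (rule finite_subset[OF _ finite_lists_length_eq[OF finS, of k]]) auto
  have finB: "finite (Sub S k)"
    by (rule finite_subset[of _ "Pow S"]) (use finS in \<open>auto simp: Sub_def\<close>)
  have img: "(\<lambda>vs. V.span (set vs)) ` ?A \<subseteq> Sub S k"
  proof clarify
    fix vs assume vs: "set vs \<subseteq> S" "indm {} vs" "k = length vs"
    have sub: "V.span (set vs) \<subseteq> S" using vs S by (intro V.span_minimal) auto
    have "card (V.span (set vs)) = ?q ^ length vs" using card_span_set[of vs n] vs S by auto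
    moreover have "card (V.span (set vs)) = ?q ^ V.dim (set vs)"
      using card_span_dim[of "set vs" n] vs S by auto
    ultimately have "V.dim (set vs) = length vs" using pow_inj_q by metis
    then show "V.span (set vs) \<in> Sub S (length vs)" using sub vs by (simp add: Sub_def)
  qed
  have fib: "card {vs\<in>?A. V.span (set vs) = Y} = (\<Prod>i<k. ?q ^ k - ?q ^ i)" if Y: "Y \<in> Sub S k" for Y
  proof -
    have Ysub: "V.subspace Y" "Y \<subseteq> ambient n" "V.dim Y = k" "Y \<subseteq> S"
      using Y S by (auto simp: Sub_def)
    have cY: "card Y = ?q ^ k" using card_subspace_dim[OF Ysub(2,1)] Ysub(3) by simp
    have finY: "finite Y" using finS Ysub(4) finite_subset by blast
    have "{vs\<in>?A. V.span (set vs) = Y} = {vs. set vs \<subseteq> Y \<and> length vs = k \<and> indm {} vs}"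
    proof (intro set_eqI iffI)
      fix vs assume "vs \<in> {vs\<in>?A. V.span (set vs) = Y}"
      then show "vs \<in> {vs. set vs \<subseteq> Y \<and> length vs = k \<and> indm {} vs}"
        using V.span_superset[of "set vs"] by auto
    next
      fix vs assume vs: "vs \<in> {vs. set vs \<subseteq> Y \<and> length vs = k \<and> indm {} vs}"
      have sub: "V.span (set vs) \<subseteq> Y" using vs Ysub(1) by (intro V.span_minimal) auto
      have "card (V.span (set vs)) = ?q ^ k" using card_span_set[of vs n] vs Ysub by auto
      then have "V.span (set vs) = Y" using card_subset_eq[OF finY sub] cY by simp
      then show "vs \<in> {vs\<in>?A. V.span (set vs) = Y}" using vs Ysub by auto
    qed
    also have "card \<dots> = (\<Prod>i<k. card Y - ?q ^ i)"
      using count_indm[OF Ysub(1,2), of "{}" k] by simp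
    finally show ?thesis using cY by simp
  qed
  have "card ?A = card (Sub S k) * (\<Prod>i<k. ?q ^ k - ?q ^ i)"
    by (rule card_fibers[OF finA img finB fib])
  then show ?thesis using cA by simp
qed

lemma indm_mono: "X \<subseteq> X' \<Longrightarrow> indm X' vs \<Longrightarrow> indm X vs"
proof (induction vs)
  case Nil then show ?case by simp
next
  case (Cons v vs)
  have "V.span (X \<union> set vs) \<subseteq> V.span (X' \<union> set vs)" using Cons.prems(1) by (intro V.span_mono) auto
  then show ?case using Cons by auto
qed

lemma indm_inter:
  fixes U W :: "(nat \<Rightarrow> 'a::field) set"
  assumes W: "V.subspace W" "W \<subseteq> U" and U: "V.subspace U"
  shows "indm U vs \<Longrightarrow> V.span (W \<union> set vs) \<inter> U \<subseteq> W"
proof (induction vs)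
  case Nil then show ?case using sp_eq[OF W(1)] by simp
next
  case (Cons v vs)
  show ?case
  proof
    fix y assume y: "y \<in> V.span (W \<union> set (v # vs)) \<inter> U"
    have "W \<union> set (v # vs) = insert v (W \<union> set vs)" by auto
    with y obtain k where k: "y - vscale k v \<in> V.span (W \<union> set vs)" "y \<in> U"
      by (auto simp: V.span_insert)
    show "y \<in> W"
    proof (cases "k = 0")
      case True
      then have "y - vscale k v = y" by (simp add: vscale_def fun_eq_iff)
      then show ?thesis using k Cons by auto
    next
      case False
      have s1: "V.span (W \<union> set vs) \<subseteq> V.span (U \<union> set vs)" using W by (intro V.span_mono) auto
      have s2: "y \<in> V.span (U \<union> set vs)" using k(2) by (intro V.span_base) auto
      have "vscale (inverse k) (y - (y - vscale k v)) \<in> V.span (U \<union> set vs)"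
      proof (rule V.span_scale, rule V.span_diff)
        show "y \<in> V.span (U \<union> set vs)" by (rule s2)
        show "y - vscale k v \<in> V.span (U \<union> set vs)" using s1 k(1) by blast
      qed
      moreover have "vscale (inverse k) (y - (y - vscale k v)) = v"
        using False by (simp add: vscale_def fun_eq_iff mult.assoc[symmetric])
      ultimately have "v \<in> V.span (U \<union> set vs)" by simp
      then show ?thesis using Cons.prems by simp
    qed
  qed
qed

lemma indm_transfer:
  fixes U W Y :: "(nat \<Rightarrow> 'a::field) set"
  assumes Y: "V.subspace Y" and U: "V.subspace U" and W: "W \<subseteq> U" "Y \<inter> U \<subseteq> W"
  shows "set vs \<subseteq> Y \<Longrightarrow> indm W vs \<Longrightarrow> indm U vs"
proof (induction vs)
  case Nil then show ?case by simp
next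
  case (Cons v vs)
  have IH: "indm U vs" using Cons by simp
  have nv: "v \<notin> V.span (W \<union> set vs)" using Cons.prems by simp
  have "v \<notin> V.span (U \<union> set vs)"
  proof
    assume "v \<in> V.span (U \<union> set vs)"
    then obtain a b where ab: "v = a + b" "a \<in> V.span U" "b \<in> V.span (set vs)"
      by (auto simp: V.span_Un)
    have aU: "a \<in> U" using ab(2) sp_eq[OF U] by simp
    have "V.span (set vs) \<subseteq> Y" using Cons.prems(1) Y by (intro V.span_minimal) auto
    then have bY: "b \<in> Y" using ab(3) by blast
    have vY: "v \<in> Y" using Cons.prems(1) by simp
    have "a = v - b" using ab(1) by simp
    also have "\<dots> \<in> Y" using vY bY sp_eq[OF Y] V.span_diff[of v Y b] by simp
    finally have "a \<in> W" using aU W(2) by blast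
    then have "a \<in> V.span (W \<union> set vs)" by (intro V.span_base) auto
    moreover have "b \<in> V.span (W \<union> set vs)" using ab(3) V.span_mono[of "set vs" "W \<union> set vs"] by auto
    ultimately have "v \<in> V.span (W \<union> set vs)" using ab(1) V.span_add by simp
    then show False using nv by simp
  qed
  then show ?case using IH by simp
qed


definition FF :: "nat \<Rightarrow> (nat \<Rightarrow> 'a::field) set \<Rightarrow> (nat \<Rightarrow> 'a) set \<Rightarrow> (nat \<Rightarrow> 'a) set set" where
  "FF n U W = {Y. V.subspace Y \<and> Y \<subseteq> ambient n \<and> V.dim Y = V.dim U \<and> Y \<inter> U = W}"

lemma dim_le_sub:
  fixes W U :: "(nat \<Rightarrow> 'a::{finite,field}) set"
  assumes "W \<subseteq> U" "V.subspace W" "V.subspace U" "U \<subseteq> ambient n"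
  shows "V.dim W \<le> V.dim U"
proof -
  have "card W \<le> card U" using assms finite_ambient finite_subset by (metis card_mono)
  then have "card (UNIV::'a set) ^ V.dim W \<le> card (UNIV::'a set) ^ V.dim U"
    using card_subspace_dim[of W n] card_subspace_dim[of U n] assms by auto
  then show ?thesis using card_field_ge2[where 'a='a] by (simp add: power_increasing_iff)
qed

lemma FF_fiber:
  fixes U W :: "(nat \<Rightarrow> 'a::{finite,field}) set"
  assumes U: "V.subspace U" "U \<subseteq> ambient n" "V.dim U = r" and W: "W \<in> Sub U j"
    and Y: "Y \<in> FF n U W"
  shows "{vs \<in> {vs. set vs \<subseteq> ambient n \<and> length vs = r - j \<and> indm U vs}. V.span (W \<union> set vs) = Y}
       = {vs. set vs \<subseteq> Y \<and> length vs = r - j \<and> indm W vs}"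
    and "card {vs. set vs \<subseteq> Y \<and> length vs = r - j \<and> indm W vs}
       = (\<Prod>i<r-j. card (UNIV::'a set) ^ r - card (UNIV::'a set) ^ j * card (UNIV::'a set) ^ i)"
proof -
  let ?q = "card (UNIV::'a set)"
  have Wp: "V.subspace W" "W \<subseteq> U" "V.dim W = j" using W by (auto simp: Sub_def)
  have WA: "W \<subseteq> ambient n" using Wp U by blast
  have jr: "j \<le> r" using dim_le_sub[OF Wp(2,1) U(1,2)] Wp U by simp
  have Yp: "V.subspace Y" "Y \<subseteq> ambient n" "V.dim Y = r" "Y \<inter> U = W" using Y U by (auto simp: FF_def)
  have finY: "finite Y" using Yp finite_ambient finite_subset by blast
  have cY: "card Y = ?q ^ r" using card_subspace_dim[OF Yp(2,1)] Yp(3) by simp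
  have cW: "card (V.span W) = ?q ^ j" using card_span_dim[OF WA] Wp(3) by simp
  have WY: "W \<subseteq> Y" using Yp(4) by blast
  show "{vs \<in> {vs. set vs \<subseteq> ambient n \<and> length vs = r - j \<and> indm U vs}. V.span (W \<union> set vs) = Y}
       = {vs. set vs \<subseteq> Y \<and> length vs = r - j \<and> indm W vs}"
  proof (intro set_eqI iffI)
    fix vs assume "vs \<in> {vs \<in> {vs. set vs \<subseteq> ambient n \<and> length vs = r - j \<and> indm U vs}. V.span (W \<union> set vs) = Y}"
    then have vs: "set vs \<subseteq> ambient n" "length vs = r - j" "indm U vs" "V.span (W \<union> set vs) = Y" by auto
    have "set vs \<subseteq> Y" using vs(4) V.span_superset[of "W \<union> set vs"] by auto
    moreover have "indm W vs" using indm_mono[OF Wp(2) vs(3)] .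
    ultimately show "vs \<in> {vs. set vs \<subseteq> Y \<and> length vs = r - j \<and> indm W vs}" using vs by auto
  next
    fix vs assume "vs \<in> {vs. set vs \<subseteq> Y \<and> length vs = r - j \<and> indm W vs}"
    then have vs: "set vs \<subseteq> Y" "length vs = r - j" "indm W vs" by auto
    have iU: "indm U vs" using indm_transfer[OF Yp(1) U(1) Wp(2)] Yp(4) vs by blast
    have sub: "V.span (W \<union> set vs) \<subseteq> Y" using vs(1) WY Yp(1) by (intro V.span_minimal) auto
    have "card (V.span (W \<union> set vs)) = ?q ^ j * ?q ^ (r - j)"
      using card_span_indm[OF WA, of vs] vs Yp(2) cW by auto
    also have "\<dots> = ?q ^ r" using jr by (simp add: power_add[symmetric])
    finally have "V.span (W \<union> set vs) = Y" using card_subset_eq[OF finY sub] cY by simp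
    then show "vs \<in> {vs \<in> {vs. set vs \<subseteq> ambient n \<and> length vs = r - j \<and> indm U vs}. V.span (W \<union> set vs) = Y}"
      using vs iU Yp(2) by auto
  qed
  show "card {vs. set vs \<subseteq> Y \<and> length vs = r - j \<and> indm W vs}
       = (\<Prod>i<r-j. ?q ^ r - ?q ^ j * ?q ^ i)"
    using count_indm[OF Yp(1,2) WY, of "r - j"] cY cW by simp
qed

lemma count_FF:
  fixes U W :: "(nat \<Rightarrow> 'a::{finite,field}) set"
  assumes U: "V.subspace U" "U \<subseteq> ambient n" "V.dim U = r" and W: "W \<in> Sub U j"
  shows "card (FF n U W) * (\<Prod>i<r-j. card (UNIV::'a set) ^ r - card (UNIV::'a set) ^ j * card (UNIV::'a set) ^ i)
       = (\<Prod>i<r-j. card (UNIV::'a set) ^ n - card (UNIV::'a set) ^ r * card (UNIV::'a set) ^ i)"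
proof -
  let ?q = "card (UNIV::'a set)"
  let ?A = "{vs. set vs \<subseteq> ambient n \<and> length vs = r - j \<and> indm U vs}"
  have Wp: "V.subspace W" "W \<subseteq> U" "V.dim W = j" using W by (auto simp: Sub_def)
  have WA: "W \<subseteq> ambient n" using Wp U by blast
  have jr: "j \<le> r" using dim_le_sub[OF Wp(2,1) U(1,2)] Wp U by simp
  have cU: "card (V.span U) = ?q ^ r" using card_span_dim[OF U(2)] U(3) by simp
  have cW: "card (V.span W) = ?q ^ j" using card_span_dim[OF WA] Wp(3) by simp
  have cA: "card ?A = (\<Prod>i<r-j. ?q ^ n - ?q ^ r * ?q ^ i)"
    using count_indm[OF subspace_ambient subset_refl, of U n "r - j"] U(2) cU card_ambient[where 'a='a, of n] by simp
  have finA: "finite ?A"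
    by (rule finite_subset[OF _ finite_lists_length_eq[OF finite_ambient, of n "r - j"]]) auto
  have finB: "finite (FF n U W)"
    by (rule finite_subset[of _ "Pow (ambient n)"]) (use finite_ambient in \<open>auto simp: FF_def\<close>)
  have img: "(\<lambda>vs. V.span (W \<union> set vs)) ` ?A \<subseteq> FF n U W"
  proof clarify
    fix vs assume vs: "set vs \<subseteq> ambient n" "length vs = r - j" "indm U vs"
    have iW: "indm W vs" using indm_mono[OF Wp(2) vs(3)] .
    have sA: "V.span (W \<union> set vs) \<subseteq> ambient n" using WA vs by (intro span_sub_ambient) auto
    have "card (V.span (W \<union> set vs)) = ?q ^ j * ?q ^ (r - j)"
      using card_span_indm[OF WA, of vs] vs iW cW by auto
    also have "\<dots> = ?q ^ r" using jr by (simp add: power_add[symmetric])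
    finally have c1: "card (V.span (W \<union> set vs)) = ?q ^ r" .
    have "card (V.span (W \<union> set vs)) = ?q ^ V.dim (W \<union> set vs)"
      using card_span_dim[of "W \<union> set vs" n] WA vs by auto
    then have dimr: "V.dim (V.span (W \<union> set vs)) = r" using c1 pow_inj_q by (metis V.dim_span)
    have int: "V.span (W \<union> set vs) \<inter> U = W"
    proof
      show "V.span (W \<union> set vs) \<inter> U \<subseteq> W" using indm_inter[OF Wp(1,2) U(1) vs(3)] .
      show "W \<subseteq> V.span (W \<union> set vs) \<inter> U" using Wp(2) V.span_superset[of "W \<union> set vs"] by auto
    qed
    show "V.span (W \<union> set vs) \<in> FF n U W" using sA dimr int U(3) by (simp add: FF_def)
  qed
  have "card ?A = card (FF n U W) * (\<Prod>i<r-j. ?q ^ r - ?q ^ j * ?q ^ i)"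
    by (rule card_fibers[OF finA img finB]) (use FF_fiber[OF U W] in simp)
  then show ?thesis using cA by simp
qed

lemma dI_FF:
  fixes U W :: "(nat \<Rightarrow> 'a::{finite,field}) set"
  assumes U: "V.subspace U" "U \<subseteq> ambient n" "V.dim U = r" and W: "W \<in> Sub U j"
    and Y: "Y \<in> FF n U W"
  shows "dI U Y = r - j"
proof -
  let ?q = "card (UNIV::'a set)"
  let ?A = "{vs. set vs \<subseteq> ambient n \<and> length vs = r - j \<and> indm U vs}"
  have Wp: "V.subspace W" "W \<subseteq> U" "V.dim W = j" using W by (auto simp: Sub_def)
  have jr: "j \<le> r" using dim_le_sub[OF Wp(2,1) U(1,2)] Wp U by simp
  have Yp: "V.subspace Y" "Y \<subseteq> ambient n" "V.dim Y = r" "Y \<inter> U = W" using Y U by (auto simp: FF_def)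
  have "(\<Prod>i<r-j. ?q ^ r - ?q ^ j * ?q ^ i) > 0"
  proof (rule prod_pos, clarify)
    fix i assume "i < r - j"
    then have "?q ^ (j + i) < ?q ^ r" using card_field_ge2[where 'a='a] jr
      by (intro power_strict_increasing) auto
    then show "0 < ?q ^ r - ?q ^ j * ?q ^ i" by (simp add: power_add)
  qed
  then have "{vs \<in> ?A. V.span (W \<union> set vs) = Y} \<noteq> {}"
    using FF_fiber[OF U W Y] by (metis card.empty less_irrefl)
  then obtain vs where vs: "set vs \<subseteq> ambient n" "length vs = r - j" "indm U vs" "V.span (W \<union> set vs) = Y"
    by auto
  have eq: "V.span (U \<union> Y) = V.span (U \<union> set vs)"
  proof
    have "Y \<subseteq> V.span (U \<union> set vs)" using vs(4) Wp(2) V.span_mono[of "W \<union> set vs" "U \<union> set vs"] by auto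
    then show "V.span (U \<union> Y) \<subseteq> V.span (U \<union> set vs)"
      by (intro V.span_minimal) (auto intro: V.span_base)
    have "set vs \<subseteq> Y" using vs(4) V.span_superset[of "W \<union> set vs"] by auto
    then show "V.span (U \<union> set vs) \<subseteq> V.span (U \<union> Y)" by (intro V.span_mono) auto
  qed
  have "card (V.span (U \<union> set vs)) = ?q ^ r * ?q ^ (r - j)"
    using card_span_indm[OF U(2), of vs] vs card_span_dim[OF U(2)] U(3) by auto
  moreover have "card (V.span (U \<union> Y)) = ?q ^ V.dim (U \<union> Y)"
    using card_span_dim[of "U \<union> Y" n] U Yp by auto
  ultimately have "?q ^ V.dim (U \<union> Y) = ?q ^ (r + (r - j))" using eq by (simp add: power_add)
  then have "V.dim (U \<union> Y) = r + (r - j)" by (rule pow_inj_q)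
  then show ?thesis unfolding dI_def sdim_eq using U(3) Yp(3) by simp
qed


lemma prod_lessThan_add_split:
  fixes a b :: nat
  shows   "(\<Prod>i<a+b. f i) = (\<Prod>i<a. f i) * (\<Prod>i<b. f (a + i))"
  by (induction b) (simp_all add: mult.assoc)

definition GG :: "real \<Rightarrow> nat \<Rightarrow> real" where
  "GG q m = (\<Prod>i<m. q ^ m - q ^ i)"

lemma GG_pos: "1 < q \<Longrightarrow> GG q m > 0"
  unfolding GG_def by (rule prod_pos) (auto intro: power_strict_increasing)

lemma num_GG:
  assumes "k \<le> m"
  shows "(\<Prod>i<k. q ^ m - q ^ i) * (q ^ (k * (m - k)) * GG q (m - k)) = GG q m"
proof -
  have "GG q m = (\<Prod>i<k + (m - k). q ^ m - q ^ i)" using assms by (simp add: GG_def)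
  also have "\<dots> = (\<Prod>i<k. q ^ m - q ^ i) * (\<Prod>i<m-k. q ^ m - q ^ (k + i))"
    by (rule prod_lessThan_add_split)
  also have "(\<Prod>i<m-k. q ^ m - q ^ (k + i)) = (\<Prod>i<m-k. q ^ k * (q ^ (m - k) - q ^ i))"
  proof (rule prod.cong[OF refl])
    fix i show "q ^ m - q ^ (k + i) = q ^ k * (q ^ (m - k) - q ^ i)"
      using assms by (simp add: algebra_simps power_add[symmetric])
  qed
  also have "\<dots> = q ^ (k * (m - k)) * GG q (m - k)"
    by (simp add: prod.distrib GG_def power_mult)
  finally show ?thesis by simp
qed

lemma gauss_GG:
  assumes "k \<le> m" "1 < q"
  shows "gauss_binom q m k = GG q m / (q ^ (k * (m - k)) * GG q k * GG q (m - k))"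
proof -
  have "gauss_binom q m k = (\<Prod>i<k. q ^ m - q ^ i) / (\<Prod>i<k. q ^ k - q ^ i)"
    by (simp add: gauss_binom_def prod_dividef)
  also have "\<dots> = (\<Prod>i<k. q ^ m - q ^ i) / GG q k" by (simp add: GG_def)
  also have "\<dots> = GG q m / (q ^ (k * (m - k)) * GG q k * GG q (m - k))"
  proof -
    have "GG q (m - k) > 0" by (rule GG_pos[OF assms(2)])
    then have "q ^ (k * (m - k)) * GG q (m - k) \<noteq> 0" using assms by simp
    then show ?thesis using num_GG[OF assms(1), of q, symmetric]
      by (simp add: field_simps)
  qed
  finally show ?thesis .
qed

lemma gauss_sym:
  assumes "k \<le> m" "1 < q"
  shows "gauss_binom q m k = gauss_binom q m (m - k)"
proof -
  have "k * (m - k) = (m - k) * (m - (m - k))" using assms by simp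
  then show ?thesis using gauss_GG[OF assms] gauss_GG[of "m - k" m q] assms
    by (simp add: mult_ac)
qed

lemma gauss_pos:
  assumes "k \<le> m" "1 < q"
  shows "gauss_binom q m k > 0"
  unfolding gauss_binom_def
proof (rule prod_pos, clarify)
  fix i assume "i < k"
  then have "q ^ i < q ^ k" "q ^ i < q ^ m" using assms
    by (auto intro: power_strict_increasing)
  then show "0 < (q ^ m - q ^ i) / (q ^ k - q ^ i)" by simp
qed

lemma gauss_0[simp]: "gauss_binom q m 0 = 1"
  by (simp add: gauss_binom_def)

lemma FF_real:
  assumes "j + d = r" "r + d \<le> n" "1 < q"
  shows "(\<Prod>i<d. q ^ n - q ^ r * q ^ i) / (\<Prod>i<d. q ^ r - q ^ j * q ^ i)
       = q ^ (d^2) * gauss_binom q (n - r) d"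
proof -
  have a: "(\<Prod>i<d. q ^ n - q ^ r * q ^ i) = q ^ (r * d) * (\<Prod>i<d. q ^ (n - r) - q ^ i)"
  proof -
    have "(\<Prod>i<d. q ^ n - q ^ r * q ^ i) = (\<Prod>i<d. q ^ r * (q ^ (n - r) - q ^ i))"
      using assms by (intro prod.cong) (simp_all add: algebra_simps power_add[symmetric])
    then show ?thesis by (simp add: prod.distrib power_mult)
  qed
  have b: "(\<Prod>i<d. q ^ r - q ^ j * q ^ i) = q ^ (j * d) * (\<Prod>i<d. q ^ d - q ^ i)"
  proof -
    have "(\<Prod>i<d. q ^ r - q ^ j * q ^ i) = (\<Prod>i<d. q ^ j * (q ^ d - q ^ i))"
      using assms by (intro prod.cong) (simp_all add: algebra_simps power_add[symmetric])
    then show ?thesis by (simp add: prod.distrib power_mult)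
  qed
  have pos: "0 < (\<Prod>i<d. q ^ d - q ^ i)" using GG_pos[OF assms(3), of d] unfolding GG_def .
  then have nz: "(\<Prod>i<d. q ^ d - q ^ i) \<noteq> 0" by linarith
  have "r * d = j * d + d ^ 2" using assms(1) by (simp add: power2_eq_square algebra_simps flip: assms(1))
  then have "q ^ (r * d) = q ^ (j * d) * q ^ (d ^ 2)"
    by (simp add: power_add[symmetric])
  then show ?thesis unfolding a b gauss_binom_def using nz assms(3)
    by (simp add: prod_dividef field_simps)
qed


lemma real_prod_diff:
  assumes "\<And>i. i < k \<Longrightarrow> b i \<le> (a i :: nat)"
  shows "real (\<Prod>i<k. a i - b i) = (\<Prod>i<k. real (a i) - real (b i))"
  unfolding of_nat_prod using assms by (intro prod.cong) (auto simp: of_nat_diff)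

lemma div_eq_from: "(c::real) * p = s \<Longrightarrow> 0 < p \<Longrightarrow> s / p = c"
  by (auto simp: field_simps)

lemma card_Sub_real:
  fixes S :: "(nat \<Rightarrow> 'a::{finite,field}) set"
  assumes S: "V.subspace S" "S \<subseteq> ambient n" "card S = card (UNIV::'a set) ^ m" and km: "k \<le> m"
  shows "real (card (Sub S k)) = gauss_binom (real (card (UNIV::'a set))) m k"
proof -
  let ?q = "card (UNIV::'a set)" let ?Q = "real ?q"
  have q1: "1 \<le> ?q" using card_field_ge2[where 'a='a] by simp
  have Q1: "1 < ?Q" using card_field_ge2[where 'a='a] by simp
  have "real (card (Sub S k) * (\<Prod>i<k. ?q ^ k - ?q ^ i)) = real (\<Prod>i<k. ?q ^ m - ?q ^ i)"
    using count_sub[OF S(1,2), of k] S(3) by simp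
  moreover have "real (\<Prod>i<k. ?q ^ k - ?q ^ i) = (\<Prod>i<k. ?Q ^ k - ?Q ^ i)"
    by (subst real_prod_diff) (use q1 in \<open>auto intro: power_increasing\<close>)
  moreover have "real (\<Prod>i<k. ?q ^ m - ?q ^ i) = (\<Prod>i<k. ?Q ^ m - ?Q ^ i)"
    by (subst real_prod_diff) (use q1 km in \<open>auto intro: power_increasing\<close>)
  ultimately have e: "real (card (Sub S k)) * (\<Prod>i<k. ?Q ^ k - ?Q ^ i) = (\<Prod>i<k. ?Q ^ m - ?Q ^ i)"
    by simp
  have pos: "0 < (\<Prod>i<k. ?Q ^ k - ?Q ^ i)" using GG_pos[OF Q1, of k] unfolding GG_def .
  have "gauss_binom ?Q m k = (\<Prod>i<k. ?Q ^ m - ?Q ^ i) / (\<Prod>i<k. ?Q ^ k - ?Q ^ i)"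
    by (simp add: gauss_binom_def prod_dividef)
  also have "\<dots> = real (card (Sub S k))" using div_eq_from[OF e pos] .
  finally show ?thesis by simp
qed

lemma card_FF_real:
  fixes U W :: "(nat \<Rightarrow> 'a::{finite,field}) set"
  assumes U: "V.subspace U" "U \<subseteq> ambient n" "V.dim U = r" and W: "W \<in> Sub U j"
    and jr: "j \<le> r" and rn: "r + (r - j) \<le> n"
  shows "real (card (FF n U W)) = real (card (UNIV::'a set)) ^ ((r - j)^2) * gauss_binom (real (card (UNIV::'a set))) (n - r) (r - j)"
proof -
  let ?q = "card (UNIV::'a set)" let ?Q = "real ?q"
  let ?d = "r - j"
  have q1: "1 \<le> ?q" using card_field_ge2[where 'a='a] by simp
  have Q1: "1 < ?Q" using card_field_ge2[where 'a='a] by simp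
  have "real (card (FF n U W) * (\<Prod>i<?d. ?q ^ r - ?q ^ j * ?q ^ i)) = real (\<Prod>i<?d. ?q ^ n - ?q ^ r * ?q ^ i)"
    using count_FF[OF U W] by simp
  moreover have "real (\<Prod>i<?d. ?q ^ r - ?q ^ j * ?q ^ i) = (\<Prod>i<?d. ?Q ^ r - ?Q ^ j * ?Q ^ i)"
  proof (subst real_prod_diff)
    fix i assume "i < ?d"
    then show "?q ^ j * ?q ^ i \<le> ?q ^ r" unfolding power_add[symmetric]
      using q1 jr by (intro power_increasing) auto
  qed simp
  moreover have "real (\<Prod>i<?d. ?q ^ n - ?q ^ r * ?q ^ i) = (\<Prod>i<?d. ?Q ^ n - ?Q ^ r * ?Q ^ i)"
  proof (subst real_prod_diff)
    fix i assume "i < ?d"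
    then show "?q ^ r * ?q ^ i \<le> ?q ^ n" unfolding power_add[symmetric]
      using q1 rn by (intro power_increasing) auto
  qed simp
  ultimately have e: "real (card (FF n U W)) * (\<Prod>i<?d. ?Q ^ r - ?Q ^ j * ?Q ^ i) = (\<Prod>i<?d. ?Q ^ n - ?Q ^ r * ?Q ^ i)"
    by simp
  have pos: "0 < (\<Prod>i<?d. ?Q ^ r - ?Q ^ j * ?Q ^ i)"
  proof (rule prod_pos, clarify)
    fix i assume "i < ?d"
    then have "?Q ^ (j + i) < ?Q ^ r" using Q1 by (intro power_strict_increasing) auto
    then show "0 < ?Q ^ r - ?Q ^ j * ?Q ^ i" by (simp add: power_add)
  qed
  have "real (card (FF n U W)) = (\<Prod>i<?d. ?Q ^ n - ?Q ^ r * ?Q ^ i) / (\<Prod>i<?d. ?Q ^ r - ?Q ^ j * ?Q ^ i)"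
    using div_eq_from[OF e pos] by simp
  also have "\<dots> = ?Q ^ (?d^2) * gauss_binom ?Q (n - r) ?d"
    by (rule FF_real) (use jr rn Q1 in auto)
  finally show ?thesis .
qed


lemma Er_eq: "Er T n r = Sub (ambient n) r"
  by (auto simp: Er_def Sub_def sdim_eq)

lemma FF_finite: "finite (FF n U (W :: (nat \<Rightarrow> 'a::{finite,field}) set))"
  by (rule finite_subset[of _ "Pow (ambient n)"]) (use finite_ambient in \<open>auto simp: FF_def\<close>)

lemma union_card:
  fixes U :: "(nat \<Rightarrow> 'a::{finite,field}) set"
  assumes U: "V.subspace U" "U \<subseteq> ambient n" "V.dim U = r" and rn: "2 * r \<le> n" and tr: "t \<le> r"
  shows "real (card (\<Union>W\<in>(\<Union>j\<in>{r-t..r}. Sub U j). FF n U W))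
       = VC (real (card (UNIV::'a set))) n r t"
proof -
  let ?q = "card (UNIV::'a set)" let ?Q = "real ?q"
  let ?WW = "\<Union>j\<in>{r-t..r}. Sub U j"
  have Q1: "1 < ?Q" using card_field_ge2[where 'a='a] by simp
  have finU: "finite U" using U finite_ambient finite_subset by blast
  have finSub: "finite (Sub U j)" for j
    by (rule finite_subset[of _ "Pow U"]) (use finU in \<open>auto simp: Sub_def\<close>)
  have cU: "card U = ?q ^ r" using card_subspace_dim[OF U(2,1)] U(3) by simp
  have "card (\<Union>W\<in>?WW. FF n U W) = (\<Sum>W\<in>?WW. card (FF n U W))"
  proof (rule card_UN_disjoint)
    show "finite ?WW" using finSub by auto
    show "\<forall>W\<in>?WW. finite (FF n U W)" using FF_finite by blast
    show "\<forall>W\<in>?WW. \<forall>W'\<in>?WW. W \<noteq> W' \<longrightarrow> FF n U W \<inter> FF n U W' = {}"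
      by (auto simp: FF_def)
  qed
  then have "real (card (\<Union>W\<in>?WW. FF n U W)) = (\<Sum>W\<in>?WW. real (card (FF n U W)))" by simp
  also have "\<dots> = (\<Sum>j\<in>{r-t..r}. \<Sum>W\<in>Sub U j. real (card (FF n U W)))"
  proof (rule sum.UNION_disjoint)
    show "\<forall>j\<in>{r-t..r}. finite (Sub U j)" using finSub by blast
    show "\<forall>j\<in>{r-t..r}. \<forall>j'\<in>{r-t..r}. j \<noteq> j' \<longrightarrow> Sub U j \<inter> Sub U j' = {}"
      by (auto simp: Sub_def)
  qed simp
  also have "\<dots> = (\<Sum>j\<in>{r-t..r}. NC ?Q n r (r - j))"
  proof (rule sum.cong[OF refl])
    fix j assume j: "j \<in> {r-t..r}"
    have "(\<Sum>W\<in>Sub U j. real (card (FF n U W)))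
        = (\<Sum>W\<in>Sub U j. ?Q ^ ((r - j)^2) * gauss_binom ?Q (n - r) (r - j))"
      by (rule sum.cong[OF refl], rule card_FF_real[OF U]) (use j rn in auto)
    also have "\<dots> = real (card (Sub U j)) * (?Q ^ ((r - j)^2) * gauss_binom ?Q (n - r) (r - j))"
      by simp
    also have "real (card (Sub U j)) = gauss_binom ?Q r j"
      using card_Sub_real[OF U(1,2) cU] j by simp
    also have "\<dots> = gauss_binom ?Q r (r - j)" using gauss_sym[of j r ?Q] j Q1 by simp
    finally show "(\<Sum>W\<in>Sub U j. real (card (FF n U W))) = NC ?Q n r (r - j)"
      by (simp add: NC_def)
  qed
  also have "\<dots> = (\<Sum>d\<in>{0..t}. NC ?Q n r d)"
    by (rule sum.reindex_bij_witness[of _ "\<lambda>d. r - d" "\<lambda>j. r - j"]) (use tr in auto)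
  also have "\<dots> = VC ?Q n r t" by (simp add: VC_def)
  finally show ?thesis .
qed


theorem proposition8:
  fixes T :: "'a::{finite,field} itself" and n r \<rho> :: nat
  assumes "r \<le> n div 2" and "0 < \<rho>" and "\<rho> < r"
  shows "real (KC T n r \<rho>)
    \<le> 1 / (1 - log (gauss_binom (real (card (UNIV :: 'a set))) n r)
                  (gauss_binom (real (card (UNIV :: 'a set))) n r - VC (real (card (UNIV :: 'a set))) n r \<rho>)) + 1"
proof -
  let ?q = "card (UNIV::'a set)" let ?Q = "real ?q"
  define E where "E = Er T n r"
  define N where "N = gauss_binom ?Q n r"
  define Vc where "Vc = VC ?Q n r \<rho>"
  have Q1: "1 < ?Q" using card_field_ge2[where 'a='a] by simp
  have "2 * (n div 2) \<le> n" by simp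
  then have rn: "2 * r \<le> n" using assms(1) by linarith
  have Eeq: "E = Sub (ambient n) r" by (simp add: E_def Er_eq)
  have finE: "finite E" unfolding Eeq
    by (rule finite_subset[of _ "Pow (ambient n)"]) (use finite_ambient in \<open>auto simp: Sub_def\<close>)
  have cardE: "real (card E) = N" unfolding Eeq N_def
    by (rule card_Sub_real[OF subspace_ambient subset_refl card_ambient]) (use rn in simp)
  have Npos: "N > 0" unfolding N_def by (rule gauss_pos) (use rn Q1 in auto)
  then have "E \<noteq> {}" using cardE by auto
  then obtain U0 where U0: "U0 \<in> E" by blast
  have Up: "V.subspace U \<and> U \<subseteq> ambient n \<and> V.dim U = r" if "U \<in> E" for U
    using that by (simp add: Eeq Sub_def)
  define ball where "ball U = {Y \<in> E. dI U Y \<le> \<rho>}" for U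
  have FF_E: "Y \<in> E" if "U \<in> E" "Y \<in> FF n U W" for U W Y
    using that Up[OF that(1)] by (auto simp: FF_def Eeq Sub_def)
  have ballge: "Vc \<le> real (card (ball U))" if U: "U \<in> E" for U
  proof -
    have Ups: "V.subspace U" "U \<subseteq> ambient n" "V.dim U = r" using Up[OF U] by auto
    have "(\<Union>W\<in>(\<Union>j\<in>{r-\<rho>..r}. Sub U j). FF n U W) \<subseteq> ball U"
    proof clarify
      fix Y W j assume j: "j \<in> {r-\<rho>..r}" and W: "W \<in> Sub U j" and Y: "Y \<in> FF n U W"
      have "dI U Y = r - j" by (rule dI_FF[OF Ups W Y])
      then show "Y \<in> ball U" using j FF_E[OF U Y] by (auto simp: ball_def)
    qed
    then have "card (\<Union>W\<in>(\<Union>j\<in>{r-\<rho>..r}. Sub U j). FF n U W) \<le> card (ball U)"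
      by (rule card_mono[rotated]) (use finE in \<open>auto simp: ball_def\<close>)
    then show ?thesis using union_card[OF Ups rn, of \<rho>] assms(3) by (simp add: Vc_def)
  qed
  have totge: "VC ?Q n r r \<le> N"
  proof -
    have Ups: "V.subspace U0" "U0 \<subseteq> ambient n" "V.dim U0 = r" using Up[OF U0] by auto
    have "(\<Union>W\<in>(\<Union>j\<in>{r-r..r}. Sub U0 j). FF n U0 W) \<subseteq> E"
      using FF_E[OF U0] by blast
    then have "card (\<Union>W\<in>(\<Union>j\<in>{r-r..r}. Sub U0 j). FF n U0 W) \<le> card E"
      by (rule card_mono[OF finE])
    then show ?thesis using union_card[OF Ups rn, of r] cardE by simp
  qed
  have NCpos: "0 < NC ?Q n r d" if "d \<le> r" for d
    unfolding NC_def using that rn Q1 by (intro mult_pos_pos gauss_pos) auto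
  have NC0: "NC ?Q n r 0 = 1" by (simp add: NC_def)
  have split: "VC ?Q n r r = Vc + (\<Sum>d\<in>{Suc \<rho>..r}. NC ?Q n r d)"
  proof -
    have "{0..r} = {0..\<rho>} \<union> {Suc \<rho>..r}" using assms(3) by auto
    then show ?thesis unfolding VC_def Vc_def by (simp add: sum.union_disjoint)
  qed
  have "NC ?Q n r r \<le> (\<Sum>d\<in>{Suc \<rho>..r}. NC ?Q n r d)"
    by (rule member_le_sum) (use assms(3) NCpos in \<open>auto intro: less_imp_le\<close>)
  then have NV: "Vc + NC ?Q n r r \<le> N" using split totge by linarith
  have "NC ?Q n r 0 \<le> Vc" unfolding Vc_def VC_def
    by (rule member_le_sum) (use assms(3) NCpos in \<open>auto intro: less_imp_le\<close>)
  then have V1: "1 \<le> Vc" using NC0 by simp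
  have NCr: "0 < NC ?Q n r r" using NCpos by simp
  have NVpos: "0 < N - Vc" using NV NCr by linarith
  have N1: "1 < N" using NV NCr V1 by linarith
  define x where "x = 1 / (1 - log N (N - Vc))"
  have lnN: "0 < ln N" using N1 by simp
  have lt: "ln (N - Vc) < ln N" using NVpos V1 by simp
  have x_eq: "x = ln N / (ln N - ln (N - Vc))"
    unfolding x_def log_def using lnN by (simp add: field_simps)
  have xpos: "0 < x" unfolding x_eq using lnN lt by simp
  define k where "k = nat \<lfloor>x\<rfloor> + 1"
  have kx: "x < real k" unfolding k_def using xpos by linarith
  have kle: "real k \<le> x + 1" unfolding k_def using xpos by linarith
  have k1: "1 \<le> k" unfolding k_def by simp
  have key: "N * (N - Vc) ^ k < N ^ k"
  proof -
    have "x * (ln N - ln (N - Vc)) = ln N" unfolding x_eq using lt by simp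
    moreover have "x * (ln N - ln (N - Vc)) < real k * (ln N - ln (N - Vc))"
      using kx lt by (intro mult_strict_right_mono) auto
    ultimately have "ln N + real k * ln (N - Vc) < real k * ln N" by (simp add: algebra_simps)
    then have "ln (N * (N - Vc) ^ k) < ln (N ^ k)"
      using Npos NVpos by (simp add: ln_mult ln_realpow)
    then show ?thesis using Npos NVpos by simp
  qed
  define L where "L = {xs. set xs \<subseteq> E \<and> length xs = k}"
  have cardL: "card L = card E ^ k" unfolding L_def by (rule card_lists_length_eq[OF finE])
  have "\<exists>xs\<in>L. \<forall>U\<in>E. \<exists>D\<in>set xs. dI U D \<le> \<rho>"
  proof (rule ccontr)
    assume nex: "\<not> ?thesis"
    let ?B = "\<lambda>U. {xs. set xs \<subseteq> E - ball U \<and> length xs = k}"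
    have sub: "L \<subseteq> (\<Union>U\<in>E. ?B U)"
    proof
      fix xs assume xs: "xs \<in> L"
      then obtain U where U: "U \<in> E" "\<forall>D\<in>set xs. \<not> dI U D \<le> \<rho>" using nex by blast
      then show "xs \<in> (\<Union>U\<in>E. ?B U)" using xs by (auto simp: L_def ball_def)
    qed
    have finB: "finite (?B U)" for U
      by (rule finite_subset[OF _ finite_lists_length_eq[OF finite_Diff[OF finE], of "ball U" k]]) auto
    have "card L \<le> card (\<Union>U\<in>E. ?B U)"
      by (rule card_mono[OF _ sub]) (use finE finB in auto)
    also have "\<dots> \<le> (\<Sum>U\<in>E. card (?B U))" by (rule card_UN_le[OF finE])
    also have "\<dots> = (\<Sum>U\<in>E. card (E - ball U) ^ k)"
      by (rule sum.cong[OF refl], rule card_lists_length_eq) (use finE in auto)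
    finally have c1: "real (card L) \<le> (\<Sum>U\<in>E. real (card (E - ball U)) ^ k)"
      by (metis (mono_tags, lifting) of_nat_le_iff of_nat_power of_nat_sum sum.cong)
    have "(\<Sum>U\<in>E. real (card (E - ball U)) ^ k) \<le> (\<Sum>U\<in>E. (N - Vc) ^ k)"
    proof (rule sum_mono)
      fix U assume U: "U \<in> E"
      have bs: "ball U \<subseteq> E" by (auto simp: ball_def)
      have "card (E - ball U) = card E - card (ball U)" using card_Diff_subset[OF finite_subset[OF bs finE] bs] .
      moreover have "card (ball U) \<le> card E" using card_mono[OF finE bs] .
      ultimately have "real (card (E - ball U)) = N - real (card (ball U))" using cardE by (simp add: of_nat_diff)
      also have "\<dots> \<le> N - Vc" using ballge[OF U] by simp
      finally show "real (card (E - ball U)) ^ k \<le> (N - Vc) ^ k" by (intro power_mono) auto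
    qed
    also have "\<dots> = N * (N - Vc) ^ k" using cardE by simp
    also have "\<dots> < N ^ k" by (rule key)
    also have "\<dots> = real (card L)" using cardL cardE by simp
    finally show False using c1 by simp
  qed
  then obtain xs where xs: "xs \<in> L" "\<forall>U\<in>E. \<exists>D\<in>set xs. dI U D \<le> \<rho>" by blast
  have CE: "set xs \<subseteq> E" using xs(1) by (simp add: L_def)
  have Cne: "set xs \<noteq> {}" using xs(2) U0 by auto
  have cr: "covering_radius T n r (set xs) \<le> \<rho>"
    unfolding covering_radius_def E_def[symmetric]
  proof (rule Max.boundedI)
    show "finite ((\<lambda>U. Min ((\<lambda>D. dI U D) ` set xs)) ` E)" using finE by simp
    show "(\<lambda>U. Min ((\<lambda>D. dI U D) ` set xs)) ` E \<noteq> {}" using U0 by auto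
    fix a assume "a \<in> (\<lambda>U. Min ((\<lambda>D. dI U D) ` set xs)) ` E"
    then obtain U where "U \<in> E" and aU: "a = Min ((\<lambda>D. dI U D) ` set xs)" by blast
    show "a \<le> \<rho>" unfolding aU
    proof -
      obtain D where D: "D \<in> set xs" "dI U D \<le> \<rho>" using xs(2) \<open>U \<in> E\<close> by blast
      have "Min ((\<lambda>D. dI U D) ` set xs) \<le> dI U D" using D(1) by (intro Min_le) auto
      then show "Min ((\<lambda>D. dI U D) ` set xs) \<le> \<rho>" using D(2) by linarith
    qed
  qed
  have "KC T n r \<rho> \<le> card (set xs)"
    unfolding KC_def E_def[symmetric]
  proof (rule Min_le)
    show "finite {card C |C. C \<subseteq> E \<and> C \<noteq> {} \<and> covering_radius T n r C \<le> \<rho>}"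
      by (rule finite_subset[of _ "card ` Pow E"]) (use finE in auto)
    show "card (set xs) \<in> {card C |C. C \<subseteq> E \<and> C \<noteq> {} \<and> covering_radius T n r C \<le> \<rho>}"
      using CE Cne cr by blast
  qed
  also have "\<dots> \<le> length xs" by (rule card_length)
  also have "\<dots> = k" using xs(1) by (simp add: L_def)
  finally have "real (KC T n r \<rho>) \<le> x + 1" using kle by linarith
  then show ?thesis unfolding x_def N_def Vc_def .
qed

end
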